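(* (Perfect soundness of the Meadows protocol.) Let a Meadows puzzle on an $n\times n$ grid be given. If the prover $P$ does not know a solution of the puzzle, then in the Meadows zero-knowledge protocol described in the context the verifier $V$ always rejects; equivalently, if $V$ accepts, then the squares printed during the protocol form a partition of the grid into squares each containing exactly one dotted cell.
   Context: Meadows puzzle: an $n\times n$ grid in which some cells $c_1,\dots,c_k$ contain a dot. A solution is a partition of the grid into squares (axis-aligned $s\times s$ blocks of cells) such that each square contains exactly one dotted cell. Cards: each card has either an integer or nothing (a blank card) on its front; all backs are indistinguishable. A pile-shifting shuffle applied to a matrix of face-down cards (entries may be equal-size stacks per row) cyclically shifts its columns by a uniformly random amount unknown to everyone. Chosen cut protocol: given face-down cards (or equal-size stacks) $c'_1,\dots,c'_q$ and a secret index $i$ chosen by $P$, $P$ forms a $3\times q$ matrix with row 1 equal to $c'_1,\dots,c'_q$, row 2 a face-down card $1$ in column $i$ and $0$ elsewhere, row 3 a card $1$ in column 1 and $0$ elsewhere (turned face-down); a pile-shifting shuffle is applied; row 2 is revealed and the card of row 1 above the $1$ is $c'_i$; after use it is put back, face-up cards are turned down, another pile-shifting shuffle is applied, row 3 is revealed and the columns are shifted cyclically so its $1$ returns to column 1. Printing protocol: given a face-down $p\times q$ template and a $p\times q$ area, each template card is placed on the corresponding area card; for each two-card stack, $P$ uses the chosen cut protocol to select a card, it is revealed, $V$ rejects unless it is blank, and it is removed. Meadows protocol: $P$ publicly puts a blank card on every cell, appends $n-1$ rows and $n-1$ columns of blank dummy cards below and to the right, and turns all cards face-down, giving a $(2n-1)\times(2n-1)$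 matrix (read row by row as a sequence). $P$ builds $n$ templates, one for each $s=1,\dots,n$: an $n\times n$ matrix whose top-left $s\times s$ block consists of cards $1$ and whose other cards are blank; $V$ checks them. For $i=1,\dots,k$: (1) via the chosen cut protocol $P$ selects the top-left card of an $n\times n$ area; (2) via the chosen cut protocol $P$ selects a template; (3) the printing protocol is applied; (4) all cards on dotted cells are revealed and $V$ rejects unless those on $c_1,\dots,c_i$ are $1$ and those on $c_{i+1},\dots,c_k$ are blank (they are then turned face-down again); (5) $P$ reconstructs a template, returns it to the pile, and $V$ checks that the pile consists of the $n$ correct templates (rejecting otherwise). Finally $P$ reveals all grid cards and $V$ rejects unless all are $1$; $P$ reveals all dummy cards and $V$ rejects unless all are blank. Otherwise $V$ accepts. *)

theory Defs
  imports Main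
begin

datatype card = Blank | Num int

type_synonym cell = "nat \<times> nat"

definition grid :: "nat \<Rightarrow> cell set" where
  "grid n = {0..<n} \<times> {0..<n}"

definition is_square :: "cell set \<Rightarrow> bool" where
  "is_square S \<longleftrightarrow> (\<exists>a b s. 1 \<le> s \<and> S = {a..<a+s} \<times> {b..<b+s})"

definition meadows_solution :: "nat \<Rightarrow> cell list \<Rightarrow> cell set list \<Rightarrow> bool" where
  "meadows_solution n D Sq \<longleftrightarrow>
     (\<forall>S\<in>set Sq. is_square S \<and> S \<subseteq> grid n \<and> card (S \<inter> set D) = 1) \<and>
     (\<forall>i<length Sq. \<forall>j<length Sq. i \<noteq> j \<longrightarrow> Sq ! i \<inter> Sq ! j = {}) \<and>
     \<Union>(set Sq) = grid n"

text \<open>The protocol matrix: (2n-1) x (2n-1) face-down cards, read row by row as a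
  sequence indexed 0 ..< (2n-1)^2.  The grid occupies rows and columns < n; the rest
  are dummy cards.\<close>
definition msize :: "nat \<Rightarrow> nat" where
  "msize n = 2 * n - 1"

type_synonym matrix = "nat \<Rightarrow> card"

definition cell_idx :: "nat \<Rightarrow> cell \<Rightarrow> nat" where
  "cell_idx n x = fst x * msize n + snd x"

text \<open>After the chosen cut protocol selects the card with index j as top-left card,
  the n x n area consists of the cards at (cyclic) sequence position j + r*m + c.\<close>
definition area_pos :: "nat \<Rightarrow> nat \<Rightarrow> nat \<Rightarrow> nat \<Rightarrow> nat" where
  "area_pos n j r c = (j + r * msize n + c) mod (msize n * msize n)"

definition template :: "nat \<Rightarrow> nat \<Rightarrow> nat \<Rightarrow> card" where
  "template s r c = (if r < s \<and> c < s then Num 1 else Blank)"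

text \<open>Prover's choices in one round: index j of the top-left card of the area
  (chosen cut protocol), the template s (chosen cut protocol), and, for every
  two-card stack (r,c) of the printing protocol, which card P selects to be revealed
  (True = the template card, False = the area card).\<close>
type_synonym round_choice = "nat \<times> nat \<times> (nat \<Rightarrow> nat \<Rightarrow> bool)"

fun print_stack :: "nat \<Rightarrow> round_choice \<Rightarrow> nat \<times> nat \<Rightarrow> matrix option \<Rightarrow> matrix option" where
  "print_stack n (j, s, ch) (r, c) None = None"
| "print_stack n (j, s, ch) (r, c) (Some M) =
     (let p = area_pos n j r c; a = M p; t = template s r c;
          revealed = (if ch r c then t else a); kept = (if ch r c then a else t)
      in if revealed = Blank then Some (M(p := kept)) else None)"

definition print_protocol :: "nat \<Rightarrow> round_choice \<Rightarrow> matrix \<Rightarrow> matrix option" where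
  "print_protocol n rc M = fold (print_stack n rc) (List.product [0..<n] [0..<n]) (Some M)"

text \<open>Step (4) of round i (0-indexed): dots 0..i carry card 1, the later dots blank.\<close>
definition dot_check :: "nat \<Rightarrow> cell list \<Rightarrow> nat \<Rightarrow> matrix \<Rightarrow> bool" where
  "dot_check n D i M \<longleftrightarrow>
     (\<forall>l<length D. M (cell_idx n (D ! l)) = (if l \<le> i then Num 1 else Blank))"

definition valid_choice :: "nat \<Rightarrow> round_choice \<Rightarrow> bool" where
  "valid_choice n rc \<longleftrightarrow>
     (case rc of (j, s, ch) \<Rightarrow> j < msize n * msize n \<and> 1 \<le> s \<and> s \<le> n)"

fun run_rounds :: "nat \<Rightarrow> cell list \<Rightarrow> round_choice list \<Rightarrow> nat \<Rightarrow> matrix \<Rightarrow> matrix option" where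
  "run_rounds n D [] i M = Some M"
| "run_rounds n D (rc # rcs) i M =
     (case print_protocol n rc M of
        None \<Rightarrow> None
      | Some M' \<Rightarrow> (if dot_check n D i M' then run_rounds n D rcs (Suc i) M' else None))"

definition meadows_accepts :: "nat \<Rightarrow> cell list \<Rightarrow> round_choice list \<Rightarrow> bool" where
  "meadows_accepts n D strat \<longleftrightarrow>
     length strat = length D \<and> (\<forall>rc\<in>set strat. valid_choice n rc) \<and>
     (case run_rounds n D strat 0 (\<lambda>_. Blank) of
        None \<Rightarrow> False
      | Some M \<Rightarrow>
          (\<forall>x\<in>grid n. M (cell_idx n x) = Num 1) \<and>
          (\<forall>p<msize n * msize n. p \<notin> cell_idx n ` grid n \<longrightarrow> M p = Blank))"

definition printed_square :: "nat \<Rightarrow> round_choice \<Rightarrow> cell set" where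
  "printed_square n rc = (case rc of (j, s, ch) \<Rightarrow>
     {j div msize n ..< j div msize n + s} \<times> {j mod msize n ..< j mod msize n + s})"

end

theory Submission imports Defs begin

lemma mod_cancel_nat:
  fixes j x y N :: nat
  assumes "(j + x) mod N = (j + y) mod N" "x < N" "y < N"
  shows "x = y"
proof (rule ccontr)
  assume ne: "x \<noteq> y"
  { fix x y :: nat assume a: "(j + x) mod N = (j + y) mod N" "x < N" "y < N" "x < y"
    have "N dvd (j + y) - (j + x)" using a mod_eq_dvd_iff_nat[of "j+x" "j+y" N] by simp
    hence "N dvd y - x" by simp
    moreover have "0 < y - x" "y - x < N" using a by auto
    ultimately have False using nat_dvd_not_less by blast }
  note * = this
  show False using ne assms *[of x y] *[of y x] by (metis linorder_neqE_nat)
qed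

lemma lt_sq: fixes x y m :: nat assumes "x < m" "y < m" shows "x * m + y < m * m"
proof -
  have "x * m + y < x * m + m" using assms by simp
  also have "... = (x+1) * m" by simp
  also have "... \<le> m * m" using assms by (intro mult_le_mono1) simp
  finally show ?thesis .
qed

lemma stack_step:
  "print_stack n (j,s,ch) (r,c) (Some M) = Some M1 \<Longrightarrow>
   (r<s \<and> c<s \<longrightarrow> M (area_pos n j r c) = Blank \<and> M1 = M(area_pos n j r c := Num 1)) \<and>
   (\<not>(r<s \<and> c<s) \<longrightarrow> M1 = M)"
  by (auto simp: template_def Let_def split: if_splits)

lemma fold_None: "fold (print_stack n (j,s,ch)) L None = None"
  by (induct L) auto

lemma fold_main:
  assumes "inj_on (\<lambda>(r,c). area_pos n j r c) (set L)" "distinct L"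
    and "fold (print_stack n (j,s,ch)) L (Some M) = Some M'"
  shows "(\<forall>p \<in> (\<lambda>(r,c). area_pos n j r c) ` {x\<in>set L. fst x < s \<and> snd x < s}. M p = Blank \<and> M' p = Num 1)
       \<and> (\<forall>p. p \<notin> (\<lambda>(r,c). area_pos n j r c) ` {x\<in>set L. fst x < s \<and> snd x < s} \<longrightarrow> M' p = M p)"
  using assms
proof (induct L arbitrary: M)
  case Nil
  then show ?case by simp
next
  case (Cons x L)
  obtain r c where x: "x = (r,c)" by force
  show ?case
  proof (cases "print_stack n (j,s,ch) (r,c) (Some M)")
    case None
    then show ?thesis using Cons.prems(3) x by (simp add: fold_None)
  next
    case (Some M1)
    have IH: "(\<forall>p \<in> (\<lambda>(r,c). area_pos n j r c) ` {x\<in>set L. fst x < s \<and> snd x < s}. M1 p = Blank \<and> M' p = Num 1)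
       \<and> (\<forall>p. p \<notin> (\<lambda>(r,c). area_pos n j r c) ` {x\<in>set L. fst x < s \<and> snd x < s} \<longrightarrow> M' p = M1 p)"
      using Cons.hyps[of M1] Cons.prems Some x by (auto intro: inj_on_subset)
    have st: "(r<s \<and> c<s \<longrightarrow> M (area_pos n j r c) = Blank \<and> M1 = M(area_pos n j r c := Num 1)) \<and>
      (\<not>(r<s \<and> c<s) \<longrightarrow> M1 = M)" using stack_step[OF Some] .
    have notin: "area_pos n j r c \<notin> (\<lambda>(r,c). area_pos n j r c) ` set L"
    proof
      assume "area_pos n j r c \<in> (\<lambda>(r,c). area_pos n j r c) ` set L"
      then obtain y where "y \<in> set L" "area_pos n j r c = (\<lambda>(r,c). area_pos n j r c) y" by blast
      with Cons.prems(1,2) x have "y = x" by (auto simp: inj_on_def)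
      with Cons.prems(2) \<open>y \<in> set L\<close> show False by simp
    qed
    show ?thesis
    proof (cases "r<s \<and> c<s")
      case True
      let ?f = "(\<lambda>(r,c). area_pos n j r c)"
      have Q: "?f ` {y\<in>set (x#L). fst y < s \<and> snd y < s} = insert (area_pos n j r c) (?f ` {x\<in>set L. fst x < s \<and> snd x < s})"
        using True x by auto
      have n2: "area_pos n j r c \<notin> ?f ` {x\<in>set L. fst x < s \<and> snd x < s}" using notin by blast
      have A: "\<forall>p \<in> ?f ` {x\<in>set L. fst x < s \<and> snd x < s}. M p = Blank \<and> M' p = Num 1"
      proof
        fix p assume p: "p \<in> ?f ` {x\<in>set L. fst x < s \<and> snd x < s}"
        hence "p \<noteq> area_pos n j r c" using n2 by blast
        hence "M1 p = M p" using st True by simp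
        moreover have "M1 p = Blank \<and> M' p = Num 1" using IH p by blast
        ultimately show "M p = Blank \<and> M' p = Num 1" by simp
      qed
      show ?thesis unfolding Q using st IH n2 True A by auto
    next
      case False
      with st IH x show ?thesis by auto
    qed
  qed
qed


definition Pset :: "nat \<Rightarrow> nat \<Rightarrow> nat \<Rightarrow> nat set" where
  "Pset n j s = {area_pos n j r c | r c. r < s \<and> c < s}"

lemma msize_ge: "1 \<le> n \<Longrightarrow> n \<le> msize n" by (simp add: msize_def)

lemma area_inj:
  assumes "1 \<le> n"
  shows "inj_on (\<lambda>(r,c). area_pos n j r c) (set (List.product [0..<n] [0..<n]))"
proof (rule inj_onI)
  fix x y assume x: "x \<in> set (List.product [0..<n] [0..<n])" and y: "y \<in> set (List.product [0..<n] [0..<n])"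
    and e: "(\<lambda>(r,c). area_pos n j r c) x = (\<lambda>(r,c). area_pos n j r c) y"
  obtain r c r' c' where xy: "x = (r,c)" "y = (r',c')" by force
  let ?m = "msize n"
  have m: "n \<le> ?m" using msize_ge assms by simp
  have b: "r < n" "c < n" "r' < n" "c' < n" using x y xy by auto
  have l1: "r * ?m + c < ?m * ?m" using lt_sq b m by simp
  have l2: "r' * ?m + c' < ?m * ?m" using lt_sq b m by simp
  have "(j + (r * ?m + c)) mod (?m * ?m) = (j + (r' * ?m + c')) mod (?m * ?m)"
    using e xy by (simp add: area_pos_def add.assoc)
  hence eq: "r * ?m + c = r' * ?m + c'" using mod_cancel_nat l1 l2 by blast
  have "c = c'" using arg_cong[OF eq, of "\<lambda>t. t mod ?m"] b m by simp
  moreover have "r = r'" using arg_cong[OF eq, of "\<lambda>t. t div ?m"] b m by simp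
  ultimately show "x = y" using xy by simp
qed

lemma round_char:
  assumes "1 \<le> n" "s \<le> n"
    and "print_protocol n (j,s,ch) M = Some M'"
  shows "(\<forall>p \<in> Pset n j s. M p = Blank \<and> M' p = Num 1) \<and> (\<forall>p. p \<notin> Pset n j s \<longrightarrow> M' p = M p)"
proof -
  have "(\<lambda>(r,c). area_pos n j r c) ` {x\<in>set (List.product [0..<n] [0..<n]). fst x < s \<and> snd x < s} = Pset n j s"
    using assms(2) by (auto simp: Pset_def image_def) (metis order_less_le_trans)
  moreover have "distinct (List.product [0..<n] [0..<n])" by (simp add: distinct_product)
  note F = fold_main[OF area_inj[OF assms(1)] this assms(3)[unfolded print_protocol_def]]
  ultimately show ?thesis by metis
qed


lemma cell_img:
  assumes "1 \<le> n" "q \<in> cell_idx n ` grid n"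
  shows "q div msize n < n \<and> q mod msize n < n"
proof -
  obtain x y where "q = x * msize n + y" "x < n" "y < n" using assms(2)
    by (auto simp: cell_idx_def grid_def)
  moreover have "n \<le> msize n" using msize_ge assms(1) by simp
  ultimately show ?thesis by simp
qed

lemma area_eq:
  assumes "1 \<le> n" "j < msize n * msize n" "j div msize n + r < msize n" "j mod msize n + c < msize n"
  shows "area_pos n j r c = cell_idx n (j div msize n + r, j mod msize n + c)"
proof -
  let ?m = "msize n"
  have "j = j div ?m * ?m + j mod ?m" by simp
  hence "j + r * ?m + c = (j div ?m + r) * ?m + (j mod ?m + c)" by (simp add: algebra_simps)
  moreover have "(j div ?m + r) * ?m + (j mod ?m + c) < ?m * ?m" using lt_sq assms(3,4) by blast
  ultimately show ?thesis by (simp add: area_pos_def cell_idx_def)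
qed

lemma geom:
  assumes n: "1 \<le> n" and j: "j < msize n * msize n" and s: "1 \<le> s" "s \<le> n"
    and sub: "Pset n j s \<subseteq> cell_idx n ` grid n"
  shows "printed_square n (j,s,ch) \<subseteq> grid n \<and> Pset n j s = cell_idx n ` printed_square n (j,s,ch)"
proof -
  let ?m = "msize n"
  define a where "a = j div ?m"
  define b where "b = j mod ?m"
  have m: "?m = 2*n - 1" by (simp add: msize_def)
  have mpos: "0 < ?m" using n m by simp
  have am: "a < ?m" using j mpos unfolding a_def by (simp add: less_mult_imp_div_less)
  have bm: "b < ?m" using mpos unfolding b_def by simp
  have "area_pos n j 0 0 = j" using j by (simp add: area_pos_def)
  moreover have "area_pos n j 0 0 \<in> Pset n j s" using s unfolding Pset_def by force
  ultimately have "j \<in> cell_idx n ` grid n" using sub by auto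
  hence an: "a < n" and bn: "b < n" using cell_img[OF n] unfolding a_def b_def by auto
  have "area_pos n j 0 (s-1) = cell_idx n (a + 0, b + (s-1))"
    using area_eq[OF n j, of 0 "s-1"] am s bn m unfolding a_def b_def by simp
  moreover have "area_pos n j 0 (s-1) \<in> Pset n j s" using s unfolding Pset_def by force
  ultimately have "cell_idx n (a, b + (s-1)) \<in> cell_idx n ` grid n" using sub by auto
  hence "(cell_idx n (a, b + (s-1))) mod ?m < n" using cell_img[OF n] by blast
  moreover have "b + (s - 1) < ?m" using bn s m by simp
  hence "(cell_idx n (a, b + (s-1))) mod ?m = b + (s - 1)"
    by (simp add: cell_idx_def)
  ultimately have bs: "b + s \<le> n" using s by simp
  have "area_pos n j (s-1) 0 = cell_idx n (a + (s-1), b + 0)"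
    using area_eq[OF n j, of "s-1" 0] bm s an m unfolding a_def b_def by simp
  moreover have "area_pos n j (s-1) 0 \<in> Pset n j s" using s unfolding Pset_def by force
  ultimately have "cell_idx n (a + (s-1), b) \<in> cell_idx n ` grid n" using sub by auto
  hence "(cell_idx n (a + (s-1), b)) div ?m < n" using cell_img[OF n] by blast
  moreover have "(cell_idx n (a + (s-1), b)) div ?m = a + (s - 1)" using bm mpos
    by (simp add: cell_idx_def)
  ultimately have as: "a + s \<le> n" using s by simp
  have PS: "printed_square n (j,s,ch) = {a..<a+s} \<times> {b..<b+s}"
    unfolding printed_square_def a_def b_def by simp
  have ae: "area_pos n j r c = cell_idx n (a + r, b + c)" if "r < s" "c < s" for r c
    using area_eq[OF n j, of r c] that as bs m n unfolding a_def b_def by simp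
  have "Pset n j s = cell_idx n ` ({a..<a+s} \<times> {b..<b+s})"
  proof
    show "Pset n j s \<subseteq> cell_idx n ` ({a..<a+s} \<times> {b..<b+s})"
      unfolding Pset_def using ae by auto
  next
    show "cell_idx n ` ({a..<a+s} \<times> {b..<b+s}) \<subseteq> Pset n j s"
    proof
      fix q assume "q \<in> cell_idx n ` ({a..<a+s} \<times> {b..<b+s})"
      then obtain x y where xy: "x \<in> {a..<a+s}" "y \<in> {b..<b+s}" "q = cell_idx n (x,y)" by auto
      hence "q = area_pos n j (x - a) (y - b)" using ae[of "x-a" "y-b"] by auto
      moreover have "x - a < s" "y - b < s" using xy by auto
      ultimately show "q \<in> Pset n j s" unfolding Pset_def by blast
    qed
  qed
  moreover have "{a..<a+s} \<times> {b..<b+s} \<subseteq> grid n" using as bs by (auto simp: grid_def)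
  ultimately show ?thesis using PS by simp
qed


lemma run_states:
  "run_rounds n D rcs i M = Some Mf \<Longrightarrow> \<exists>Ms. Ms 0 = M \<and> Ms (length rcs) = Mf \<and>
    (\<forall>k<length rcs. print_protocol n (rcs!k) (Ms k) = Some (Ms (Suc k)) \<and> dot_check n D (i+k) (Ms (Suc k)))"
proof (induct rcs arbitrary: i M)
  case Nil
  then show ?case by (intro exI[of _ "\<lambda>_. M"]) simp
next
  case (Cons rc rcs)
  then obtain M1 where p: "print_protocol n rc M = Some M1" and d: "dot_check n D i M1"
    and r: "run_rounds n D rcs (Suc i) M1 = Some Mf"
    by (auto split: option.splits if_splits)
  from Cons.hyps[OF r] obtain Ms where Ms: "Ms 0 = M1" "Ms (length rcs) = Mf"
    "\<forall>k<length rcs. print_protocol n (rcs!k) (Ms k) = Some (Ms (Suc k)) \<and> dot_check n D (Suc i+k) (Ms (Suc k))"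
    by blast
  show ?case
  proof (intro exI[of _ "\<lambda>k. if k = 0 then M else Ms (k - 1)"] conjI allI impI)
    fix k assume k: "k < length (rc # rcs)"
    show "print_protocol n ((rc # rcs) ! k) (if k = 0 then M else Ms (k - 1)) =
          Some (if Suc k = 0 then M else Ms (Suc k - 1))"
      using k p Ms by (cases k) auto
    show "dot_check n D (i + k) (if Suc k = 0 then M else Ms (Suc k - 1))"
      using k d Ms by (cases k) auto
  qed (use Ms in auto)
qed


lemma cell_inj: "1 \<le> n \<Longrightarrow> inj_on (cell_idx n) (grid n)"
proof (rule inj_onI)
  fix x y assume n: "1 \<le> n" and x: "x \<in> grid n" and y: "y \<in> grid n" and e: "cell_idx n x = cell_idx n y"
  have m: "n \<le> msize n" using msize_ge n by simp
  obtain a b c d where ab: "x = (a,b)" "y = (c,d)" by force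
  have "b < msize n" "d < msize n" using x y ab m by (auto simp: grid_def)
  hence "a = c" "b = d" using arg_cong[OF e, of "\<lambda>t. t div msize n"] arg_cong[OF e, of "\<lambda>t. t mod msize n"] ab
    by (auto simp: cell_idx_def)
  thus "x = y" using ab by simp
qed

theorem lemma5:
  fixes n :: nat and D :: "cell list" and strat :: "round_choice list"
  assumes "1 \<le> n"
    and "set D \<subseteq> grid n"
    and "meadows_accepts n D strat"
  shows "meadows_solution n D (map (printed_square n) strat)"
proof -
  note n = assms(1)
  let ?m = "msize n"
  define N where "N = length strat"
  have len: "length D = N" and valid: "\<forall>rc\<in>set strat. valid_choice n rc"
    using assms(3) unfolding meadows_accepts_def N_def by auto
  obtain Mf where run: "run_rounds n D strat 0 (\<lambda>_. Blank) = Some Mf"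
    and fin1: "\<forall>x\<in>grid n. Mf (cell_idx n x) = Num 1"
    and fin2: "\<forall>p<?m * ?m. p \<notin> cell_idx n ` grid n \<longrightarrow> Mf p = Blank"
    using assms(3) unfolding meadows_accepts_def by (auto split: option.splits)
  obtain Ms where Ms0: "Ms 0 = (\<lambda>_. Blank)" and MsN: "Ms N = Mf"
    and Mstep: "\<forall>k<N. print_protocol n (strat!k) (Ms k) = Some (Ms (Suc k)) \<and> dot_check n D k (Ms (Suc k))"
    using run_states[OF run] unfolding N_def by auto
  define J where "J k = fst (strat!k)" for k
  define Z where "Z k = fst (snd (strat!k))" for k
  define C where "C k = snd (snd (strat!k))" for k
  have sk: "strat!k = (J k, Z k, C k)" for k unfolding J_def Z_def C_def by simp
  define P where "P k = Pset n (J k) (Z k)" for k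
  have vk: "J k < ?m * ?m \<and> 1 \<le> Z k \<and> Z k \<le> n" if "k < N" for k
  proof -
    have "strat!k \<in> set strat" using that unfolding N_def by simp
    hence "valid_choice n (J k, Z k, C k)" using valid sk[of k] by metis
    thus ?thesis by (simp add: valid_choice_def)
  qed
  have R: "(\<forall>p\<in>P k. Ms k p = Blank \<and> Ms (Suc k) p = Num 1) \<and> (\<forall>p. p\<notin>P k \<longrightarrow> Ms (Suc k) p = Ms k p)"
    if "k < N" for k
  proof -
    have "print_protocol n (J k, Z k, C k) (Ms k) = Some (Ms (Suc k))" using Mstep that sk[of k] by metis
    from round_char[OF n _ this] vk[OF that] show ?thesis unfolding P_def by blast
  qed
  have persist: "Ms l p = Num 1" if "Ms k p = Num 1" "k \<le> l" "l \<le> N" for k l p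
    using that
  proof (induct l)
    case 0 then show ?case by simp
  next
    case (Suc l)
    show ?case
    proof (cases "k = Suc l")
      case True then show ?thesis using Suc by simp
    next
      case False
      hence "Ms l p = Num 1" using Suc by simp
      thus ?thesis using R[of l] Suc by (cases "p \<in> P l") auto
    qed
  qed
  have origin: "\<exists>k<l. p \<in> P k" if "Ms l p \<noteq> Ms 0 p" "l \<le> N" for l p
    using that
  proof (induct l)
    case 0 then show ?case by simp
  next
    case (Suc l)
    show ?case
    proof (cases "p \<in> P l")
      case True then show ?thesis by auto
    next
      case False
      hence "Ms l p \<noteq> Ms 0 p" using R[of l] Suc by auto
      then obtain k where "k < l" "p \<in> P k" using Suc by auto
      then show ?thesis using less_SucI by blast
    qed
  qed
  have mpos: "0 < ?m" using n by (simp add: msize_def)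
  have Psub: "P k \<subseteq> cell_idx n ` grid n" if "k < N" for k
  proof
    fix p assume p: "p \<in> P k"
    have "Ms N p = Num 1" using persist[of "Suc k" p N] R[OF that] p that by auto
    moreover have "p < ?m * ?m" using p mpos unfolding P_def Pset_def area_pos_def by auto
    ultimately show "p \<in> cell_idx n ` grid n" using fin2 MsN by force
  qed
  define Sq where "Sq k = printed_square n (strat!k)" for k
  have G: "Sq k \<subseteq> grid n \<and> P k = cell_idx n ` Sq k" if "k < N" for k
    using geom[OF n, of "J k" "Z k" "C k"] vk[OF that] Psub[OF that] sk[of k]
    unfolding Sq_def P_def by auto
  have cinj: "inj_on (cell_idx n) (grid n)" using cell_inj[OF n] .
  have inSq: "x \<in> Sq k \<longleftrightarrow> cell_idx n x \<in> P k" if "k < N" "x \<in> grid n" for k x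
    using G[OF that(1)] cinj that(2) by (auto simp: inj_on_def)
  have Dg: "D!l \<in> grid n" if "l < N" for l using assms(2) len that by auto
  have dots: "Sq k \<inter> set D = {D!k}" if k: "k < N" for k
  proof -
    have a1: "Ms (Suc k) (cell_idx n (D!k)) = Num 1" using Mstep k len unfolding dot_check_def by auto
    have a0: "Ms k (cell_idx n (D!k)) = Blank"
    proof (cases k)
      case 0 then show ?thesis using Ms0 by simp
    next
      case (Suc k')
      then show ?thesis using Mstep[rule_format, of k'] k len unfolding dot_check_def by auto
    qed
    have "cell_idx n (D!k) \<in> P k" using R[OF k] a0 a1 by force
    hence "D!k \<in> Sq k" using inSq[OF k Dg[OF k]] by simp
    moreover have "D!l \<notin> Sq k" if l: "l < N" "l \<noteq> k" for l
    proof
      assume "D!l \<in> Sq k"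
      hence pl: "cell_idx n (D!l) \<in> P k" using inSq[OF k Dg[OF l(1)]] by simp
      show False
      proof (cases "l < k")
        case True
        then obtain k' where k': "k = Suc k'" by (cases k) auto
        have "Ms k (cell_idx n (D!l)) = Num 1"
          using Mstep[rule_format, of k'] k k' True l len unfolding dot_check_def by auto
        then show False using R[OF k] pl by auto
      next
        case False
        hence "Ms (Suc k) (cell_idx n (D!l)) = Blank"
          using Mstep[rule_format, of k] k l len unfolding dot_check_def by auto
        then show False using R[OF k] pl by auto
      qed
    qed
    ultimately show ?thesis using len k by (auto simp: in_set_conv_nth) metis
  qed
  have disj: "Sq i \<inter> Sq j = {}" if "i < j" "j < N" for i j
  proof (rule ccontr)
    assume "Sq i \<inter> Sq j \<noteq> {}"
    then obtain x where x: "x \<in> Sq i" "x \<in> Sq j" by blast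
    have i: "i < N" using that by simp
    have xg: "x \<in> grid n" using G[OF i] x by auto
    have pi: "cell_idx n x \<in> P i" and pj: "cell_idx n x \<in> P j" using inSq i that(2) xg x by auto
    have "Ms j (cell_idx n x) = Num 1" using persist[of "Suc i" _ j] R[OF i] pi that by auto
    then show False using R[OF that(2)] pj by auto
  qed
  have sq: "is_square (Sq k)" if "k < N" for k
    using vk[OF that] sk[of k] unfolding Sq_def printed_square_def is_square_def by auto
  show ?thesis
    unfolding meadows_solution_def
  proof (intro conjI)
    show "\<forall>S\<in>set (map (printed_square n) strat). is_square S \<and> S \<subseteq> grid n \<and> card (S \<inter> set D) = 1"
    proof
      fix S assume "S \<in> set (map (printed_square n) strat)"
      then obtain k where k: "k < N" "S = Sq k" unfolding Sq_def N_def by (auto simp: in_set_conv_nth)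
      show "is_square S \<and> S \<subseteq> grid n \<and> card (S \<inter> set D) = 1" using k sq G dots by auto
    qed
    show "\<forall>i<length (map (printed_square n) strat). \<forall>j<length (map (printed_square n) strat).
      i \<noteq> j \<longrightarrow> map (printed_square n) strat ! i \<inter> map (printed_square n) strat ! j = {}"
    proof (intro allI impI)
      fix i j assume ij: "i < length (map (printed_square n) strat)" "j < length (map (printed_square n) strat)" "i \<noteq> j"
      hence "i < N" "j < N" unfolding N_def by auto
      hence "Sq i \<inter> Sq j = {}" using disj ij(3) by (metis Int_commute nat_neq_iff)
      thus "map (printed_square n) strat ! i \<inter> map (printed_square n) strat ! j = {}"
        using ij unfolding Sq_def by simp
    qed
    show "\<Union> (set (map (printed_square n) strat)) = grid n"
    proof
      show "\<Union> (set (map (printed_square n) strat)) \<subseteq> grid n"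
      proof
        fix x assume "x \<in> \<Union> (set (map (printed_square n) strat))"
        then obtain k where "k < N" "x \<in> Sq k" unfolding Sq_def N_def by (auto simp: in_set_conv_nth)
        thus "x \<in> grid n" using G by blast
      qed
    next
      show "grid n \<subseteq> \<Union> (set (map (printed_square n) strat))"
      proof
        fix x assume x: "x \<in> grid n"
        have "Ms N (cell_idx n x) \<noteq> Ms 0 (cell_idx n x)" using fin1 x MsN Ms0 by auto
        then obtain k where "k < N" "cell_idx n x \<in> P k" using origin by blast
        hence "x \<in> Sq k" "k < N" using inSq x by auto
        thus "x \<in> \<Union> (set (map (printed_square n) strat))" unfolding Sq_def N_def by auto
      qed
    qed
  qed
qed

end
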